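(* Let $(X,\mathtt{d})$ be an instance of metric $k$-center clustering with $z$ outliers with optimal clusters $C_1,\dots,C_k$ and optimal radius $r_{\mathtt{opt}}$, and run Algorithm 1 (described in the context) with parameters $\epsilon>0$, $\eta\in(0,1/2)$, $t\in\mathbb{Z}^+$. Then in each round $j$ of the loop (Step 3), either the event $\mathtt{d}(Q_j,E)\leq 2r_{\mathtt{opt}}$ happens (with $E$ the current set before the round's sampling), or with probability at least $1-\eta$ the event $\lambda_j(E)\geq\lambda_{j-1}(E)+1$ happens.
   Context: Let $(X,\mathtt{d})$ be a finite metric space with $|X|=n$ and let $k,z$ be positive integers with $z<n$. The $k$-center clustering with $z$ outliers problem asks for $X'\subseteq X$ with $|X'|\geq n-z$ and centers $c_1,\dots,c_k\in X$ minimizing $\max_{p\in X'}\min_j\mathtt{d}(p,c_j)$; $r_{\mathtt{opt}}$ is the optimal value, $X_{\mathtt{opt}}$ a fixed optimal inlier set of size $n-z$, and $C_1,\dots,C_k$ the optimal clusters partitioning $X_{\mathtt{opt}}$, each contained in a ball of radius $r_{\mathtt{opt}}$ centered at a point of $X$. For sets $X_1,X_2\subseteq X$, $\mathtt{d}(X_1,X_2)=\min_{p\in X_1,q\in X_2}\mathtt{d}(p,q)$ and $\mathtt{d}(p,E)=\min_{q\in E}\mathtt{d}(p,q)$. Algorithm 1: Let $\gamma=z/n$, $E=\emptyset$. Set $j=1$ and add to $E$ $\frac{1}{1-\gamma}\log\frac1\eta$ vertices selected uniformly at random from $X$. Step 3: while $j<t$: set $j=j+1$; let $Q_j$ be the set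 of the $(1+\epsilon)z$ vertices of $X$ farthest from $E$; add to $E$ $\frac{1+\epsilon}{\epsilon}\log\frac1\eta$ vertices selected uniformly at random from $Q_j$. Output $E$. $\lambda_j(E)$ denotes the number of indices $l\in\{1,\dots,k\}$ with $C_l\cap E\neq\emptyset$ at the beginning of the $j$-th round of Step 3 (so $\lambda_j(E)$ vs. $\lambda_{j-1}(E)$ compares the counts after and before the sampling of round $j$). *)

theory Defs
  imports "HOL-Probability.Probability"
begin

definition metric_on :: "'a set \<Rightarrow> ('a \<Rightarrow> 'a \<Rightarrow> real) \<Rightarrow> bool" where
  "metric_on X d \<longleftrightarrow>
     (\<forall>p\<in>X. \<forall>q\<in>X. d p q \<ge> 0 \<and> d p q = d q p \<and> (d p q = 0 \<longleftrightarrow> p = q)) \<and>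
     (\<forall>p\<in>X. \<forall>q\<in>X. \<forall>r\<in>X. d p r \<le> d p q + d q r)"

definition set_dist :: "('a \<Rightarrow> 'a \<Rightarrow> real) \<Rightarrow> 'a set \<Rightarrow> 'a set \<Rightarrow> real" where
  "set_dist d A B = Min {d p q | p q. p \<in> A \<and> q \<in> B}"

definition kzc_cost :: "('a \<Rightarrow> 'a \<Rightarrow> real) \<Rightarrow> nat \<Rightarrow> 'a set \<Rightarrow> (nat \<Rightarrow> 'a) \<Rightarrow> real" where
  "kzc_cost d k Y c = Max ((\<lambda>p. Min ((\<lambda>j. d p (c j)) ` {..<k})) ` Y)"

definition kzc_opt :: "'a set \<Rightarrow> ('a \<Rightarrow> 'a \<Rightarrow> real) \<Rightarrow> nat \<Rightarrow> nat \<Rightarrow> real" where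
  "kzc_opt X d k z = Min {kzc_cost d k Y c | Y c. Y \<subseteq> X \<and> card Y \<ge> card X - z \<and> (\<forall>j<k. c j \<in> X)}"

definition lam :: "nat \<Rightarrow> (nat \<Rightarrow> 'a set) \<Rightarrow> 'a set \<Rightarrow> nat" where
  "lam k C E = card {l \<in> {..<k}. C l \<inter> E \<noteq> {}}"

definition farthest_set :: "('a \<Rightarrow> 'a \<Rightarrow> real) \<Rightarrow> 'a set \<Rightarrow> 'a set \<Rightarrow> nat \<Rightarrow> 'a set \<Rightarrow> bool" where
  "farthest_set d X E s Q \<longleftrightarrow> Q \<subseteq> X \<and> card Q = s \<and>
     (\<forall>q\<in>Q. \<forall>p\<in>X - Q. set_dist d {p} E \<le> set_dist d {q} E)"

end

theory Submission
  imports Defs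
begin

lemma numeric_bound:
  fixes \<epsilon> \<eta> :: real and m :: nat
  assumes eps: "\<epsilon> > 0" and eta: "0 < \<eta>" "\<eta> < 1/2"
    and m: "m = nat \<lceil>(1 + \<epsilon>) / \<epsilon> * ln (1 / \<eta>)\<rceil>"
  shows "(1 / (1 + \<epsilon>)) ^ m \<le> \<eta>"
proof -
  define L where "L = ln (1 / \<eta>)"
  have Lpos: "L > 0" unfolding L_def using eta by simp
  have mge: "real m \<ge> (1 + \<epsilon>) / \<epsilon> * L"
    unfolding m L_def by linarith
  have lnge: "ln (1 + \<epsilon>) \<ge> \<epsilon> / (1 + \<epsilon>)"
  proof -
    have "ln (1 / (1 + \<epsilon>)) \<le> 1 / (1 + \<epsilon>) - 1" using eps by (intro ln_le_minus_one) simp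
    moreover have "ln (1 / (1 + \<epsilon>)) = - ln (1 + \<epsilon>)" using eps by (simp add: ln_div)
    moreover have "1 / (1 + \<epsilon>) - 1 = - (\<epsilon> / (1 + \<epsilon>))" using eps by (simp add: field_simps)
    ultimately show ?thesis by linarith
  qed
  have "real m * ln (1 + \<epsilon>) \<ge> ((1 + \<epsilon>) / \<epsilon> * L) * (\<epsilon> / (1 + \<epsilon>))"
    using mge lnge eps Lpos by (intro mult_mono) auto
  also have "((1 + \<epsilon>) / \<epsilon> * L) * (\<epsilon> / (1 + \<epsilon>)) = L"
  proof -
    have "1 + \<epsilon> \<noteq> 0" "\<epsilon> \<noteq> 0" using eps by auto
    have "(1 + \<epsilon>) / \<epsilon> * (\<epsilon> / (1 + \<epsilon>)) = 1" using eps by simp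
    hence "((1 + \<epsilon>) / \<epsilon> * L) * (\<epsilon> / (1 + \<epsilon>)) = L * ((1 + \<epsilon>) / \<epsilon> * (\<epsilon> / (1 + \<epsilon>)))"
      by (simp only: mult_ac)
    thus ?thesis using \<open>(1 + \<epsilon>) / \<epsilon> * (\<epsilon> / (1 + \<epsilon>)) = 1\<close> by simp
  qed
  finally have key: "real m * ln (1 + \<epsilon>) \<ge> L" .
  have "ln ((1 / (1 + \<epsilon>)) ^ m) = real m * ln (1 / (1 + \<epsilon>))"
    using eps by (intro ln_realpow)
  also have "\<dots> = - (real m * ln (1 + \<epsilon>))" using eps by (simp add: ln_div)
  also have "\<dots> \<le> - L" using key by simp
  also have "- L = ln \<eta>" unfolding L_def using eta by (simp add: ln_div)
  finally have "ln ((1 / (1 + \<epsilon>)) ^ m) \<le> ln \<eta>" .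
  then show ?thesis using eta eps by (subst (asm) ln_le_cancel_iff) auto
qed

theorem lemma7:
  fixes X :: "'a set" and d :: "'a \<Rightarrow> 'a \<Rightarrow> real" and k z :: nat
    and Xopt :: "'a set" and C :: "nat \<Rightarrow> 'a set"
    and \<epsilon> \<eta> :: real and E Q :: "'a set"
  assumes fin: "finite X" and met: "metric_on X d"
    and kpos: "k > 0" and zpos: "z > 0" and zn: "z < card X"
    and Xopt: "Xopt \<subseteq> X" "card Xopt = card X - z"
    and part: "(\<Union>l<k. C l) = Xopt" "\<forall>l<k. \<forall>l'<k. l \<noteq> l' \<longrightarrow> C l \<inter> C l' = {}"
    and balls: "\<forall>l<k. \<exists>c\<in>X. \<forall>p\<in>C l. d p c \<le> kzc_opt X d k z"
    and eps: "\<epsilon> > 0" and eta: "0 < \<eta>" "\<eta> < 1/2"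
    and E: "E \<subseteq> X" "E \<noteq> {}"
    and Q: "farthest_set d X E (min (card X) (nat \<lceil>(1 + \<epsilon>) * real z\<rceil>)) Q"
  shows "set_dist d Q E \<le> 2 * kzc_opt X d k z \<or>
         measure_pmf.prob
           (Pi_pmf {..<nat \<lceil>(1 + \<epsilon>) / \<epsilon> * ln (1 / \<eta>)\<rceil>} undefined (\<lambda>_. pmf_of_set Q))
           {S. lam k C (E \<union> S ` {..<nat \<lceil>(1 + \<epsilon>) / \<epsilon> * ln (1 / \<eta>)\<rceil>}) \<ge> lam k C E + 1}
         \<ge> 1 - \<eta>"
proof (cases "set_dist d Q E \<le> 2 * kzc_opt X d k z")
  case True
  thus ?thesis by simp
next
  case False
  define r where "r = kzc_opt X d k z"
  define m where "m = nat \<lceil>(1 + \<epsilon>) / \<epsilon> * ln (1 / \<eta>)\<rceil>"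
  define s where "s = nat \<lceil>(1 + \<epsilon>) * real z\<rceil>"
  define I where "I = {..<m}"
  from False have nd: "set_dist d Q E > 2 * r" unfolding r_def by simp
  have QX: "Q \<subseteq> X" and cQ: "card Q = min (card X) s"
    using Q unfolding farthest_set_def s_def by auto
  have finQ: "finite Q" using QX fin finite_subset by blast
  have finE: "finite E" using E fin finite_subset by blast
  have far: "d q e > 2 * r" if "q \<in> Q" "e \<in> E" for q e
  proof -
    have "finite {d p q | p q. p \<in> Q \<and> q \<in> E}"
    proof -
      have "{d p q | p q. p \<in> Q \<and> q \<in> E} = (\<lambda>(p,q). d p q) ` (Q \<times> E)" by auto
      thus ?thesis using finQ finE by simp
    qed
    hence "set_dist d Q E \<le> d q e" unfolding set_dist_def
      by (rule Min_le) (use that in blast)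
    thus ?thesis using nd by simp
  qed
  have dpos: "\<And>p q. p \<in> X \<Longrightarrow> q \<in> X \<Longrightarrow> d p q \<ge> 0"
    and dsym: "\<And>p q. p \<in> X \<Longrightarrow> q \<in> X \<Longrightarrow> d p q = d q p"
    and d0: "\<And>p. p \<in> X \<Longrightarrow> d p p = 0"
    and dtri: "\<And>p q w. p \<in> X \<Longrightarrow> q \<in> X \<Longrightarrow> w \<in> X \<Longrightarrow> d p w \<le> d p q + d q w"
    using met unfolding metric_on_def by auto
  have CX: "C l \<subseteq> X" if "l < k" for l using part(1) Xopt(1) that by blast
  have finXopt: "finite Xopt" using Xopt(1) fin finite_subset by blast
  have "Xopt \<noteq> {}" using Xopt(2) zn by auto
  then obtain p where "p \<in> Xopt" by blast
  then obtain l where l: "l < k" "p \<in> C l" using part(1) by blast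
  then obtain c where "c \<in> X" "\<forall>p\<in>C l. d p c \<le> r" using balls unfolding r_def by blast
  hence rnn: "r \<ge> 0" using dpos[of p c] CX[OF l(1)] l(2) by force
  have QneX: "Q \<noteq> X"
  proof
    assume "Q = X"
    then obtain e where "e \<in> E" "e \<in> Q" using E by blast
    thus False using far[of e e] d0[of e] rnn QX by auto
  qed
  have "card Q < card X" using QneX QX fin by (meson psubsetI psubset_card_mono)
  hence cQs: "card Q = s" using cQ by simp
  have sge: "real s \<ge> (1 + \<epsilon>) * real z" unfolding s_def by linarith
  have spos: "real s > 0" using sge eps zpos
    by (smt (verit) mult_pos_pos of_nat_0_less_iff)
  have Qne: "Q \<noteq> {}" using cQs spos by auto
  define G where "G = Q \<inter> Xopt"
  have Ggood: "\<exists>l<k. q \<in> C l \<and> C l \<inter> E = {}" if "q \<in> G" for q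
  proof -
    from that obtain l where l: "l < k" "q \<in> C l" using part(1) unfolding G_def by blast
    moreover have "C l \<inter> E = {}"
    proof (rule ccontr)
      assume "C l \<inter> E \<noteq> {}"
      then obtain e where e: "e \<in> C l" "e \<in> E" by blast
      obtain c where c: "c \<in> X" "\<forall>p\<in>C l. d p c \<le> r" using balls l(1) unfolding r_def by blast
      have qX: "q \<in> X" "e \<in> X" using CX[OF l(1)] l(2) e by auto
      have "d q e \<le> d q c + d c e" using dtri qX c by blast
      also have "d c e = d e c" using dsym qX c by blast
      finally have "d q e \<le> d q c + d e c" .
      moreover have "d q c \<le> r" "d e c \<le> r" using c l e by auto
      ultimately have "d q e \<le> 2 * r" by linarith
      thus False using far[of q e] that e unfolding G_def by auto
    qed
    ultimately show ?thesis by blast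
  qed
  have cQG: "card (Q - G) \<le> z"
  proof -
    have "Q - G \<subseteq> X - Xopt" using QX unfolding G_def by blast
    hence "card (Q - G) \<le> card (X - Xopt)" using fin by (intro card_mono) auto
    also have "card (X - Xopt) = z" using Xopt fin card_Diff_subset[OF finXopt Xopt(1)] zn by simp
    finally show ?thesis .
  qed
  define A where "A = {S. lam k C (E \<union> S ` I) \<ge> lam k C E + 1}"
  have incr: "S \<in> A" if iS: "i \<in> I" "S i \<in> G" for S i
  proof -
    obtain l0 where l0: "l0 < k" "S i \<in> C l0" "C l0 \<inter> E = {}" using Ggood[OF iS(2)] by blast
    define A0 where "A0 = {l \<in> {..<k}. C l \<inter> E \<noteq> {}}"
    define A1 where "A1 = {l \<in> {..<k}. C l \<inter> (E \<union> S ` I) \<noteq> {}}"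
    have "insert l0 A0 \<subseteq> A1" unfolding A0_def A1_def using l0 iS by blast
    hence "card (insert l0 A0) \<le> card A1" by (intro card_mono) (auto simp: A1_def)
    moreover have "card (insert l0 A0) = card A0 + 1" using l0 by (simp add: A0_def)
    ultimately show ?thesis unfolding A_def lam_def A0_def A1_def by simp
  qed
  define M where "M = Pi_pmf I undefined (\<lambda>_. pmf_of_set Q)"
  have finI: "finite I" unfolding I_def by simp
  have setM: "set_pmf M = PiE_dflt I undefined (\<lambda>_. Q)"
    unfolding M_def using Qne finQ by (simp add: set_Pi_pmf[OF finI] o_def set_pmf_of_set)
  have sub: "(UNIV - A) \<inter> set_pmf M \<subseteq> Pi I (\<lambda>_. Q - G)"
  proof
    fix S assume S: "S \<in> (UNIV - A) \<inter> set_pmf M"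
    show "S \<in> Pi I (\<lambda>_. Q - G)"
    proof
      fix i assume i: "i \<in> I"
      have "S i \<in> Q" using S i setM unfolding PiE_dflt_def by auto
      moreover have "S i \<notin> G" using incr[OF i] S by blast
      ultimately show "S i \<in> Q - G" by blast
    qed
  qed
  have "measure_pmf.prob M (UNIV - A) = measure_pmf.prob M ((UNIV - A) \<inter> set_pmf M)"
    by (simp add: measure_Int_set_pmf)
  also have "\<dots> \<le> measure_pmf.prob M (Pi I (\<lambda>_. Q - G))"
    using sub by (intro measure_pmf.finite_measure_mono) auto
  also have "\<dots> = (\<Prod>i\<in>I. measure_pmf.prob (pmf_of_set Q) (Q - G))"
    unfolding M_def by (rule measure_Pi_pmf_Pi[OF finI])
  also have "\<dots> = (real (card (Q - G)) / real (card Q)) ^ m"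
    using Qne finQ by (simp add: measure_pmf_of_set I_def Int_absorb1 Diff_subset)
  also have "\<dots> \<le> (1 / (1 + \<epsilon>)) ^ m"
  proof (rule power_mono)
    have "real (card (Q - G)) / real (card Q) \<le> real z / real s"
      using cQG cQs spos by (simp add: divide_right_mono)
    also have "\<dots> \<le> 1 / (1 + \<epsilon>)"
      using sge eps zpos spos by (simp add: field_simps)
    finally show "real (card (Q - G)) / real (card Q) \<le> 1 / (1 + \<epsilon>)" .
  qed simp
  also have "\<dots> \<le> \<eta>" using numeric_bound[OF eps eta m_def] .
  finally have "measure_pmf.prob M (UNIV - A) \<le> \<eta>" .
  moreover have "measure_pmf.prob M (UNIV - A) = 1 - measure_pmf.prob M A"
    using measure_pmf.prob_compl[of A M] by simp
  ultimately have "measure_pmf.prob M A \<ge> 1 - \<eta>" by simp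
  thus ?thesis
    using M_def A_def I_def m_def by simp
qed

end
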